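(* Let $K$ be a field, $R$ a connected $\mathbb N$-graded $K$-algebra, and let $A$ be a graded trimmed right double Ore extension of $R$, with generators $x_1,x_2$, relation $x_2x_1=p_{12}x_1x_2+p_{11}x_1^2$ ($p_{12},p_{11}\in K$) and $x_ir=\sigma_{i1}(r)x_1+\sigma_{i2}(r)x_2$ for $r\in R$, $i=1,2$. Then $A$ is a graded quasi-commutative skew PBW extension of $R$ (in $x_1,x_2$) if and only if $p_{12}\ne0$, $p_{11}=0$, $\sigma_{11},\sigma_{22}$ are automorphisms of $R$, and $\sigma_{12}(r)=\sigma_{21}(r)=0$ for all $r\in R$.
   Context: A graded algebra is connected if its degree-zero part is $K$. A $K$-algebra $B\supseteq R$ is a right double Ore extension of $R$ if it is generated by $R$ and $x_1,x_2$; $x_2x_1=p_{12}x_1x_2+p_{11}x_1^2+\tau_1x_1+\tau_2x_2+\tau_0$ with $p_{12},p_{11}\in K$, $\tau_i\in R$; $B$ is a free left $R$-module with basis $\{x_1^ax_2^b\}$; $x_1R+x_2R\subseteq Rx_1+Rx_2+R$; write $x_ir=\sigma_{i1}(r)x_1+\sigma_{i2}(r)x_2+\delta_i(r)$. It is trimmed if $\delta_1=\delta_2=0$ and $\tau_0=\tau_1=\tau_2=0$; graded if all relations are homogeneous with $\deg x_1=\deg x_2=1$. A ring $A$ is a skew PBW extension of $R$ in $x_1,\dots,x_n$ if $R\subseteq A$; $A$ is a free left $R$-module on the monomials $x_1^{\alpha_1}\cdots x_n^{\alpha_n}$; for each $i$ and $r\ne0$ there is $c_{i,r}\in R\setminus\{0\}$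 with $x_ir-c_{i,r}x_i\in R$; for all $i,j$ there is $c_{i,j}\in R\setminus\{0\}$ with $x_jx_i-c_{i,j}x_ix_j\in R+Rx_1+\cdots+Rx_n$; then $x_ir=\sigma_i(r)x_i+\delta_i(r)$ with $\sigma_i$ an injective endomorphism. It is quasi-commutative if $x_ir=c_{i,r}x_i$ and $x_jx_i=c_{i,j}x_ix_j$; bijective if all $\sigma_i$ are bijective and $c_{i,j}$ invertible; graded if bijective, $R$ $\mathbb N$-graded, $\sigma_i$ graded, $\delta_i(R_m)\subseteq R_{m+1}$, and $x_jx_i-c_{i,j}x_ix_j\in R_2+R_1x_1+\cdots+R_1x_n$ with $c_{i,j}\in R_0$. *)

theory Defs
  imports Main
begin

text \<open>The ambient ring A is the whole type 'a (a ring with 1). The field K is a separate type 'k,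
  and the K-algebra structure is an injective ring homomorphism phi from K
  into the centre of A with image inside R.\<close>

definition subring_set :: "'a::ring_1 set \<Rightarrow> bool" where
  "subring_set R \<longleftrightarrow> 0 \<in> R \<and> 1 \<in> R \<and>
     (\<forall>a\<in>R. \<forall>b\<in>R. a + b \<in> R \<and> a - b \<in> R \<and> a * b \<in> R)"

definition central_alg_hom :: "('k::field \<Rightarrow> 'a::ring_1) \<Rightarrow> bool" where
  "central_alg_hom phi \<longleftrightarrow>
     (\<forall>k l. phi (k + l) = phi k + phi l \<and> phi (k * l) = phi k * phi l) \<and>
     phi 1 = 1 \<and> (\<forall>k a. phi k * a = a * phi k)"

inductive_set gen_subring :: "'a::ring_1 set \<Rightarrow> 'a set" for S where
  gen_base: "s \<in> S \<Longrightarrow> s \<in> gen_subring S"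
| gen_one: "1 \<in> gen_subring S"
| gen_diff: "a \<in> gen_subring S \<Longrightarrow> b \<in> gen_subring S \<Longrightarrow> a - b \<in> gen_subring S"
| gen_mult: "a \<in> gen_subring S \<Longrightarrow> b \<in> gen_subring S \<Longrightarrow> a * b \<in> gen_subring S"

definition left_free_basis :: "'a::ring_1 set \<Rightarrow> 'i set \<Rightarrow> ('i \<Rightarrow> 'a) \<Rightarrow> bool" where
  "left_free_basis R I b \<longleftrightarrow>
     (\<forall>y. \<exists>!c. (\<forall>i. c i \<in> R) \<and> (\<forall>i. i \<notin> I \<longrightarrow> c i = 0) \<and>
              finite {i. c i \<noteq> 0} \<and> y = (\<Sum>i\<in>{i. c i \<noteq> 0}. c i * b i))"

definition graded_alg :: "('k::field \<Rightarrow> 'a::ring_1) \<Rightarrow> 'a set \<Rightarrow> (nat \<Rightarrow> 'a set) \<Rightarrow> bool" where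
  "graded_alg phi R Rg \<longleftrightarrow>
     subring_set R \<and>
     (\<forall>m. Rg m \<subseteq> R \<and> 0 \<in> Rg m \<and>
          (\<forall>a\<in>Rg m. \<forall>b\<in>Rg m. a + b \<in> Rg m) \<and>
          (\<forall>k. \<forall>a\<in>Rg m. phi k * a \<in> Rg m)) \<and>
     (\<forall>m n. \<forall>a\<in>Rg m. \<forall>b\<in>Rg n. a * b \<in> Rg (m + n)) \<and>
     (\<forall>r\<in>R. \<exists>!f. (\<forall>m. f m \<in> Rg m) \<and> finite {m. f m \<noteq> 0} \<and>
                 r = (\<Sum>m\<in>{m. f m \<noteq> 0}. f m))"

definition connected_graded :: "('k::field \<Rightarrow> 'a::ring_1) \<Rightarrow> 'a set \<Rightarrow> (nat \<Rightarrow> 'a set) \<Rightarrow> bool" where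
  "connected_graded phi R Rg \<longleftrightarrow> graded_alg phi R Rg \<and> inj phi \<and> Rg 0 = range phi"

definition ring_aut_on :: "'a::ring_1 set \<Rightarrow> ('a \<Rightarrow> 'a) \<Rightarrow> bool" where
  "ring_aut_on R f \<longleftrightarrow> bij_betw f R R \<and>
     (\<forall>a\<in>R. \<forall>b\<in>R. f (a + b) = f a + f b \<and> f (a * b) = f a * f b) \<and> f 1 = 1"

definition graded_trimmed_right_double_ore ::
  "('k::field \<Rightarrow> 'a::ring_1) \<Rightarrow> 'a set \<Rightarrow> (nat \<Rightarrow> 'a set) \<Rightarrow> 'a \<Rightarrow> 'a \<Rightarrow> 'k \<Rightarrow> 'k \<Rightarrow>
   ('a \<Rightarrow> 'a) \<Rightarrow> ('a \<Rightarrow> 'a) \<Rightarrow> ('a \<Rightarrow> 'a) \<Rightarrow> ('a \<Rightarrow> 'a) \<Rightarrow> bool" where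
  "graded_trimmed_right_double_ore phi R Rg x1 x2 p12 p11 s11 s12 s21 s22 \<longleftrightarrow>
     subring_set R \<and> range phi \<subseteq> R \<and>
     gen_subring (R \<union> {x1, x2}) = UNIV \<and>
     x2 * x1 = phi p12 * x1 * x2 + phi p11 * x1 ^ 2 \<and>
     left_free_basis R UNIV (\<lambda>(a::nat, b::nat). x1 ^ a * x2 ^ b) \<and>
     (\<forall>r\<in>R. s11 r \<in> R \<and> s12 r \<in> R \<and> s21 r \<in> R \<and> s22 r \<in> R \<and>
        x1 * r = s11 r * x1 + s12 r * x2 \<and> x2 * r = s21 r * x1 + s22 r * x2) \<and>
     (\<forall>m. s11 ` Rg m \<subseteq> Rg m \<and> s12 ` Rg m \<subseteq> Rg m \<and>
          s21 ` Rg m \<subseteq> Rg m \<and> s22 ` Rg m \<subseteq> Rg m)"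

text \<open>Skew PBW extensions in variables xs = [x_1,...,x_n] (0-indexed list).
  Monomials x_1^{a_1} ... x_n^{a_n} are indexed by exponent lists of length n.\<close>
definition pbw_mono :: "'a::ring_1 list \<Rightarrow> nat list \<Rightarrow> 'a" where
  "pbw_mono xs \<alpha> = prod_list (map (\<lambda>(x, a). x ^ a) (zip xs \<alpha>))"

definition lin_span_vars :: "'a::ring_1 set \<Rightarrow> 'a set \<Rightarrow> 'a list \<Rightarrow> 'a set" where
  "lin_span_vars S0 S1 xs =
     {a + (\<Sum>k<length xs. b k * xs ! k) | a b. a \<in> S0 \<and> (\<forall>k. b k \<in> S1)}"

definition skew_PBW :: "'a::ring_1 set \<Rightarrow> 'a list \<Rightarrow> bool" where
  "skew_PBW R xs \<longleftrightarrow>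
     subring_set R \<and>
     left_free_basis R {\<alpha>. length \<alpha> = length xs} (pbw_mono xs) \<and>
     (\<forall>i<length xs. \<forall>r\<in>R. r \<noteq> 0 \<longrightarrow>
        (\<exists>c\<in>R. c \<noteq> 0 \<and> xs ! i * r - c * xs ! i \<in> R)) \<and>
     (\<forall>i<length xs. \<forall>j<length xs.
        (\<exists>c\<in>R. c \<noteq> 0 \<and> xs ! j * xs ! i - c * xs ! i * xs ! j \<in> lin_span_vars R R xs))"

definition graded_qc_skew_PBW ::
  "('k::field \<Rightarrow> 'a::ring_1) \<Rightarrow> 'a set \<Rightarrow> (nat \<Rightarrow> 'a set) \<Rightarrow> 'a list \<Rightarrow> bool" where
  "graded_qc_skew_PBW phi R Rg xs \<longleftrightarrow>
     skew_PBW R xs \<and> graded_alg phi R Rg \<and>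
     (\<exists>\<sigma> \<delta> c.
        (\<forall>i<length xs. \<forall>r\<in>R. \<sigma> i r \<in> R \<and> \<delta> i r \<in> R \<and>
            xs ! i * r = \<sigma> i r * xs ! i + \<delta> i r) \<and>
        (\<forall>i<length xs. \<forall>j<length xs. c i j \<in> R \<and> c i j \<noteq> 0 \<and>
            xs ! j * xs ! i - c i j * xs ! i * xs ! j \<in> lin_span_vars R R xs) \<and>
        \<comment> \<open>quasi-commutative\<close>
        (\<forall>i<length xs. \<forall>r\<in>R. \<delta> i r = 0) \<and>
        (\<forall>i<length xs. \<forall>j<length xs. xs ! j * xs ! i = c i j * xs ! i * xs ! j) \<and>
        \<comment> \<open>bijective\<close>
        (\<forall>i<length xs. bij_betw (\<sigma> i) R R) \<and>
        (\<forall>i<length xs. \<forall>j<length xs. \<exists>d\<in>R. c i j * d = 1 \<and> d * c i j = 1) \<and>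
        \<comment> \<open>graded\<close>
        (\<forall>i<length xs. \<forall>m. \<sigma> i ` Rg m \<subseteq> Rg m \<and> \<delta> i ` Rg m \<subseteq> Rg (Suc m)) \<and>
        (\<forall>i<length xs. \<forall>j<length xs. c i j \<in> Rg 0 \<and>
            xs ! j * xs ! i - c i j * xs ! i * xs ! j \<in> lin_span_vars (Rg 2) (Rg 1) xs))"

end

theory Submission
  imports Defs
begin

lemma lfb_unique:
  assumes lfb: "left_free_basis R UNIV b" and F: "finite F"
    and cR: "\<forall>i. c i \<in> R" and dR: "\<forall>i. d i \<in> R"
    and c0: "\<forall>i. i \<notin> F \<longrightarrow> c i = 0" and d0: "\<forall>i. i \<notin> F \<longrightarrow> d i = 0"
    and eq: "(\<Sum>i\<in>F. c i * b i) = (\<Sum>i\<in>F. d i * b i)"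
  shows "c = d"
proof -
  have sc: "{i. c i \<noteq> 0} \<subseteq> F" using c0 by blast
  have sd: "{i. d i \<noteq> 0} \<subseteq> F" using d0 by blast
  have fc: "finite {i. c i \<noteq> 0}" using sc F finite_subset by blast
  have fd: "finite {i. d i \<noteq> 0}" using sd F finite_subset by blast
  have ec: "(\<Sum>i\<in>{i. c i \<noteq> 0}. c i * b i) = (\<Sum>i\<in>F. c i * b i)"
    by (rule sum.mono_neutral_left[OF F sc]) auto
  have ed: "(\<Sum>i\<in>{i. d i \<noteq> 0}. d i * b i) = (\<Sum>i\<in>F. d i * b i)"
    by (rule sum.mono_neutral_left[OF F sd]) auto
  let ?y = "\<Sum>i\<in>F. c i * b i"
  from lfb have "\<exists>!e. (\<forall>i. e i \<in> R) \<and> (\<forall>i. i \<notin> UNIV \<longrightarrow> e i = 0) \<and>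
              finite {i. e i \<noteq> 0} \<and> ?y = (\<Sum>i\<in>{i. e i \<noteq> 0}. e i * b i)"
    unfolding left_free_basis_def by blast
  moreover have "(\<forall>i. c i \<in> R) \<and> (\<forall>i. i \<notin> UNIV \<longrightarrow> c i = 0) \<and>
              finite {i. c i \<noteq> 0} \<and> ?y = (\<Sum>i\<in>{i. c i \<noteq> 0}. c i * b i)"
    using cR fc ec by simp
  moreover have "(\<forall>i. d i \<in> R) \<and> (\<forall>i. i \<notin> UNIV \<longrightarrow> d i = 0) \<and>
              finite {i. d i \<noteq> 0} \<and> ?y = (\<Sum>i\<in>{i. d i \<noteq> 0}. d i * b i)"
    using dR fd ed eq by simp
  ultimately show ?thesis by blast
qed

lemma lfb_two:
  assumes lfb: "left_free_basis R UNIV b" and ne: "i1 \<noteq> i2" and R0: "0 \<in> R"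
    and R: "r1 \<in> R" "r2 \<in> R" "s1 \<in> R" "s2 \<in> R"
    and eq: "r1 * b i1 + r2 * b i2 = s1 * b i1 + s2 * b i2"
  shows "r1 = s1 \<and> r2 = s2"
proof -
  define c where "c i = (if i = i1 then r1 else if i = i2 then r2 else 0)" for i
  define d where "d i = (if i = i1 then s1 else if i = i2 then s2 else 0)" for i
  have "c = d"
    apply (rule lfb_unique[OF lfb, of "{i1, i2}"])
    using ne R R0 eq by (auto simp: c_def d_def)
  then have "c i1 = d i1" "c i2 = d i2" by auto
  then show ?thesis using ne by (simp add: c_def d_def)
qed

lemma lfb_transfer:
  assumes lfb: "left_free_basis R UNIV b" and bij: "bij_betw h J UNIV"
    and bb: "\<forall>j\<in>J. b' j = b (h j)" and R0: "0 \<in> R"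
  shows "left_free_basis R J b'"
  unfolding left_free_basis_def
proof
  fix y
  from lfb obtain c' where c': "(\<forall>i. c' i \<in> R) \<and> finite {i. c' i \<noteq> 0} \<and>
        y = (\<Sum>i\<in>{i. c' i \<noteq> 0}. c' i * b i)"
    and uq: "\<And>e. (\<forall>i. e i \<in> R) \<and> (\<forall>i. i \<notin> (UNIV::'b set) \<longrightarrow> e i = 0) \<and>
              finite {i. e i \<noteq> 0} \<and> y = (\<Sum>i\<in>{i. e i \<noteq> 0}. e i * b i) \<Longrightarrow> e = c'"
  proof -
    from lfb have "\<exists>!e. (\<forall>i. e i \<in> R) \<and> (\<forall>i. i \<notin> (UNIV::'b set) \<longrightarrow> e i = 0) \<and>
              finite {i. e i \<noteq> 0} \<and> y = (\<Sum>i\<in>{i. e i \<noteq> 0}. e i * b i)"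
      unfolding left_free_basis_def by blast
    then obtain c' where "(\<forall>i. c' i \<in> R) \<and> (\<forall>i. i \<notin> (UNIV::'b set) \<longrightarrow> c' i = 0) \<and>
              finite {i. c' i \<noteq> 0} \<and> y = (\<Sum>i\<in>{i. c' i \<noteq> 0}. c' i * b i)"
      and "\<And>e. (\<forall>i. e i \<in> R) \<and> (\<forall>i. i \<notin> (UNIV::'b set) \<longrightarrow> e i = 0) \<and>
              finite {i. e i \<noteq> 0} \<and> y = (\<Sum>i\<in>{i. e i \<noteq> 0}. e i * b i) \<Longrightarrow> e = c'"
      by (elim ex1E) blast
    then show ?thesis using that by blast
  qed
  have inj: "inj_on h J" and surj: "h ` J = UNIV" using bij by (auto simp: bij_betw_def)
  define c where "c j = (if j \<in> J then c' (h j) else 0)" for j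
  have img: "h ` {j. c j \<noteq> 0} = {i. c' i \<noteq> 0}"
  proof
    show "h ` {j. c j \<noteq> 0} \<subseteq> {i. c' i \<noteq> 0}" by (auto simp: c_def split: if_splits)
    show "{i. c' i \<noteq> 0} \<subseteq> h ` {j. c j \<noteq> 0}"
    proof
      fix i assume "i \<in> {i. c' i \<noteq> 0}"
      moreover from surj obtain j where "j \<in> J" "i = h j" by (metis UNIV_I imageE)
      ultimately show "i \<in> h ` {j. c j \<noteq> 0}" by (auto simp: c_def)
    qed
  qed
  have sJ: "{j. c j \<noteq> 0} \<subseteq> J" by (auto simp: c_def split: if_splits)
  have injS: "inj_on h {j. c j \<noteq> 0}" using inj sJ inj_on_subset by blast
  show "\<exists>!c. (\<forall>i. c i \<in> R) \<and> (\<forall>i. i \<notin> J \<longrightarrow> c i = 0) \<and>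
              finite {i. c i \<noteq> 0} \<and> y = (\<Sum>i\<in>{i. c i \<noteq> 0}. c i * b' i)"
  proof (rule ex1I[of _ c])
    have fin: "finite {j. c j \<noteq> 0}" using img c' injS finite_imageD by metis
    have "(\<Sum>i\<in>{i. c i \<noteq> 0}. c i * b' i) = (\<Sum>i\<in>{i. c i \<noteq> 0}. c' (h i) * b (h i))"
      using sJ bb by (intro sum.cong) (auto simp: c_def)
    also have "\<dots> = (\<Sum>i\<in>h ` {i. c i \<noteq> 0}. c' i * b i)"
      using injS by (simp add: sum.reindex)
    finally have "y = (\<Sum>i\<in>{i. c i \<noteq> 0}. c i * b' i)" using img c' by simp
    then show "(\<forall>i. c i \<in> R) \<and> (\<forall>i. i \<notin> J \<longrightarrow> c i = 0) \<and>
              finite {i. c i \<noteq> 0} \<and> y = (\<Sum>i\<in>{i. c i \<noteq> 0}. c i * b' i)"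
      using fin c' R0 by (auto simp: c_def)
  next
    fix e assume e: "(\<forall>i. e i \<in> R) \<and> (\<forall>i. i \<notin> J \<longrightarrow> e i = 0) \<and>
              finite {i. e i \<noteq> 0} \<and> y = (\<Sum>i\<in>{i. e i \<noteq> 0}. e i * b' i)"
    define e' where "e' i = e (inv_into J h i)" for i
    have seJ: "{j. e j \<noteq> 0} \<subseteq> J" using e by blast
    have injE: "inj_on h {j. e j \<noteq> 0}" using inj seJ inj_on_subset by blast
    have inv: "\<And>j. j \<in> J \<Longrightarrow> inv_into J h (h j) = j" using inj by simp
    have img2: "{i. e' i \<noteq> 0} = h ` {j. e j \<noteq> 0}"
    proof
      show "h ` {j. e j \<noteq> 0} \<subseteq> {i. e' i \<noteq> 0}" using seJ inv by (auto simp: e'_def)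
      show "{i. e' i \<noteq> 0} \<subseteq> h ` {j. e j \<noteq> 0}"
      proof
        fix i assume i: "i \<in> {i. e' i \<noteq> 0}"
        have "inv_into J h i \<in> J" using surj by (simp add: inv_into_into)
        moreover have "h (inv_into J h i) = i" using surj by (simp add: f_inv_into_f)
        moreover have "e (inv_into J h i) \<noteq> 0" using i by (simp add: e'_def)
        ultimately show "i \<in> h ` {j. e j \<noteq> 0}" by (intro image_eqI[where x="inv_into J h i"]) simp_all
      qed
    qed
    have "(\<Sum>i\<in>{i. e' i \<noteq> 0}. e' i * b i) = (\<Sum>j\<in>{j. e j \<noteq> 0}. e' (h j) * b (h j))"
      unfolding img2 using injE by (simp add: sum.reindex)
    also have "\<dots> = (\<Sum>j\<in>{j. e j \<noteq> 0}. e j * b' j)"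
      using seJ bb inv by (intro sum.cong) (auto simp: e'_def)
    finally have yy: "y = (\<Sum>i\<in>{i. e' i \<noteq> 0}. e' i * b i)" using e by simp
    have fe: "finite {i. e' i \<noteq> 0}" unfolding img2 using e by simp
    have "e' = c'" apply (rule uq) using e yy fe unfolding e'_def by blast
    then show "e = c"
    proof -
      assume ec: "e' = c'"
      show "e = c"
      proof
        fix j show "e j = c j"
        proof (cases "j \<in> J")
          case True then show ?thesis using ec inv[OF True] unfolding c_def e'_def by metis
        next
          case False then show ?thesis using e by (simp add: c_def)
        qed
      qed
    qed
  qed
qed


lemma len2_cases: "length (\<alpha>::nat list) = 2 \<Longrightarrow> \<exists>a b. \<alpha> = [a, b]"
  by (cases \<alpha>; cases "tl \<alpha>") auto

lemma pbw_basis2: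
  assumes "left_free_basis R UNIV (\<lambda>(a::nat, b::nat). x1 ^ a * x2 ^ b)" "0 \<in> R"
  shows "left_free_basis R {\<alpha>. length \<alpha> = length [x1, x2]} (pbw_mono [x1, x2])"
proof -
  have bij: "bij_betw (\<lambda>\<alpha>::nat list. (\<alpha> ! 0, \<alpha> ! 1)) {\<alpha>. length \<alpha> = 2} UNIV"
    unfolding bij_betw_def
  proof
    show "inj_on (\<lambda>\<alpha>::nat list. (\<alpha> ! 0, \<alpha> ! 1)) {\<alpha>. length \<alpha> = 2}"
      by (auto simp: inj_on_def dest!: len2_cases)
    show "(\<lambda>\<alpha>::nat list. (\<alpha> ! 0, \<alpha> ! 1)) ` {\<alpha>. length \<alpha> = 2} = UNIV"
    proof (rule set_eqI)
      fix p :: "nat \<times> nat"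
      show "p \<in> (\<lambda>\<alpha>::nat list. (\<alpha> ! 0, \<alpha> ! 1)) ` {\<alpha>. length \<alpha> = 2} \<longleftrightarrow> p \<in> UNIV"
        by (cases p) (auto intro!: image_eqI[where x="[fst p, snd p]"])
    qed
  qed
  have bb: "\<forall>j\<in>{\<alpha>. length \<alpha> = 2}. pbw_mono [x1, x2] j =
      (\<lambda>(a::nat, b::nat). x1 ^ a * x2 ^ b) ((\<lambda>\<alpha>::nat list. (\<alpha> ! 0, \<alpha> ! 1)) j)"
    by (auto simp: pbw_mono_def dest!: len2_cases)
  have l2: "length [x1, x2] = 2" by simp
  show ?thesis unfolding l2 by (rule lfb_transfer[OF assms(1) bij bb assms(2)])
qed

theorem theorem3p9:
  fixes phi :: "'k::field \<Rightarrow> 'a::ring_1"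
    and R :: "'a set" and Rg :: "nat \<Rightarrow> 'a set"
    and x1 x2 :: 'a and p12 p11 :: 'k
    and s11 s12 s21 s22 :: "'a \<Rightarrow> 'a"
  assumes "central_alg_hom phi"
    and "connected_graded phi R Rg"
    and "graded_trimmed_right_double_ore phi R Rg x1 x2 p12 p11 s11 s12 s21 s22"
  shows "graded_qc_skew_PBW phi R Rg [x1, x2] \<longleftrightarrow>
           p12 \<noteq> 0 \<and> p11 = 0 \<and> ring_aut_on R s11 \<and> ring_aut_on R s22 \<and>
           (\<forall>r\<in>R. s12 r = 0) \<and> (\<forall>r\<in>R. s21 r = 0)"
proof -
  note ch = assms(1)[unfolded central_alg_hom_def]
  have phiadd: "\<And>k l. phi (k + l) = phi k + phi l" and phimul: "\<And>k l. phi (k * l) = phi k * phi l"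
    and phi1: "phi 1 = 1" using ch by blast+
  have phi0: "phi 0 = 0" using phiadd[of 0 0] by simp
  have ga: "graded_alg phi R Rg" and injphi: "inj phi" and Rg0: "Rg 0 = range phi"
    using assms(2) unfolding connected_graded_def by blast+
  have Rgall: "\<forall>m. Rg m \<subseteq> R \<and> 0 \<in> Rg m \<and>
          (\<forall>a\<in>Rg m. \<forall>b\<in>Rg m. a + b \<in> Rg m) \<and>
          (\<forall>k. \<forall>a\<in>Rg m. phi k * a \<in> Rg m)"
    using ga unfolding graded_alg_def by (elim conjE) assumption
  have Rg: "\<And>m. Rg m \<subseteq> R \<and> 0 \<in> Rg m" using Rgall by blast
  note ore = assms(3)[unfolded graded_trimmed_right_double_ore_def]
  have sR: "subring_set R" using ore by (elim conjE) assumption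
  have phiR: "range phi \<subseteq> R" using ore by (elim conjE) assumption
  have rel: "x2 * x1 = phi p12 * x1 * x2 + phi p11 * x1 ^ 2" using ore by (elim conjE) assumption
  have lfb: "left_free_basis R UNIV (\<lambda>(a::nat, b::nat). x1 ^ a * x2 ^ b)" using ore by (elim conjE) assumption
  have sig: "\<forall>r\<in>R. s11 r \<in> R \<and> s12 r \<in> R \<and> s21 r \<in> R \<and> s22 r \<in> R \<and>
        x1 * r = s11 r * x1 + s12 r * x2 \<and> x2 * r = s21 r * x1 + s22 r * x2"
    using ore by (elim conjE) assumption
  have sgr: "\<forall>m. s11 ` Rg m \<subseteq> Rg m \<and> s12 ` Rg m \<subseteq> Rg m \<and>
          s21 ` Rg m \<subseteq> Rg m \<and> s22 ` Rg m \<subseteq> Rg m"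
    using ore by (elim conjE) assumption
  have R0: "0 \<in> R" and R1: "1 \<in> R" and Rclos: "\<And>a b. a \<in> R \<Longrightarrow> b \<in> R \<Longrightarrow> a + b \<in> R \<and> a - b \<in> R \<and> a * b \<in> R"
    using sR by (auto simp: subring_set_def)
  have nt: "(1::'a) \<noteq> 0" using injphi phi0 phi1 by (metis inj_eq zero_neq_one)
  have B10: "(\<lambda>(a::nat, b::nat). x1 ^ a * x2 ^ b) (1, 0) = x1" by simp
  have B01: "(\<lambda>(a::nat, b::nat). x1 ^ a * x2 ^ b) (0, 1) = x2" by simp
  have B11: "(\<lambda>(a::nat, b::nat). x1 ^ a * x2 ^ b) (1, 1) = x1 * x2" by simp
  have B20: "(\<lambda>(a::nat, b::nat). x1 ^ a * x2 ^ b) (2, 0) = x1 ^ 2" by simp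
  have two: "\<And>r1 r2 s1 s2. r1 \<in> R \<Longrightarrow> r2 \<in> R \<Longrightarrow> s1 \<in> R \<Longrightarrow> s2 \<in> R \<Longrightarrow>
      r1 * x1 + r2 * x2 = s1 * x1 + s2 * x2 \<Longrightarrow> r1 = s1 \<and> r2 = s2"
    using lfb_two[OF lfb, of "(1,0)" "(0,1)"] R0 by simp
  have one1: "\<And>r s. r \<in> R \<Longrightarrow> s \<in> R \<Longrightarrow> r * x1 = s * x1 \<Longrightarrow> r = s"
    using two R0 by force
  have one2: "\<And>r s. r \<in> R \<Longrightarrow> s \<in> R \<Longrightarrow> r * x2 = s * x2 \<Longrightarrow> r = s"
    using two R0 by force
  have twoq: "\<And>r1 r2 s1 s2. r1 \<in> R \<Longrightarrow> r2 \<in> R \<Longrightarrow> s1 \<in> R \<Longrightarrow> s2 \<in> R \<Longrightarrow>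
      r1 * (x1 * x2) + r2 * x1 ^ 2 = s1 * (x1 * x2) + s2 * x1 ^ 2 \<Longrightarrow> r1 = s1 \<and> r2 = s2"
    using lfb_two[OF lfb, of "(1,1)" "(2,0)"] R0 by simp
  show ?thesis
  proof
    assume "graded_qc_skew_PBW phi R Rg [x1, x2]"
    then obtain \<sigma> \<delta> c where
      h1: "\<forall>i<length [x1, x2]. \<forall>r\<in>R. \<sigma> i r \<in> R \<and> \<delta> i r \<in> R \<and> [x1, x2] ! i * r = \<sigma> i r * [x1, x2] ! i + \<delta> i r"
      and h2: "\<forall>i<length [x1, x2]. \<forall>j<length [x1, x2]. c i j \<in> R \<and> c i j \<noteq> 0 \<and>
            [x1, x2] ! j * [x1, x2] ! i - c i j * [x1, x2] ! i * [x1, x2] ! j \<in> lin_span_vars R R [x1, x2]"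
      and h3: "\<forall>i<length [x1, x2]. \<forall>r\<in>R. \<delta> i r = 0"
      and h4: "\<forall>i<length [x1, x2]. \<forall>j<length [x1, x2]. [x1, x2] ! j * [x1, x2] ! i = c i j * [x1, x2] ! i * [x1, x2] ! j"
      and h5: "\<forall>i<length [x1, x2]. bij_betw (\<sigma> i) R R"
      unfolding graded_qc_skew_PBW_def by (elim conjE exE) blast
    have L0: "(0::nat) < length [x1, x2]" and L1: "(1::nat) < length [x1, x2]" by simp_all
    have q1: "\<And>r. r \<in> R \<Longrightarrow> x1 * r = \<sigma> 0 r * x1 \<and> \<sigma> 0 r \<in> R"
    proof -
      fix r assume r: "r \<in> R"
      have "[x1, x2] ! 0 * r = \<sigma> 0 r * [x1, x2] ! 0 + \<delta> 0 r \<and> \<sigma> 0 r \<in> R \<and> \<delta> 0 r = 0"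
        using h1 h3 L0 r by blast
      then show "x1 * r = \<sigma> 0 r * x1 \<and> \<sigma> 0 r \<in> R" by simp
    qed
    have q2: "\<And>r. r \<in> R \<Longrightarrow> x2 * r = \<sigma> 1 r * x2 \<and> \<sigma> 1 r \<in> R"
    proof -
      fix r assume r: "r \<in> R"
      have "[x1, x2] ! 1 * r = \<sigma> 1 r * [x1, x2] ! 1 + \<delta> 1 r \<and> \<sigma> 1 r \<in> R \<and> \<delta> 1 r = 0"
        using h1 h3 L1 r by blast
      then show "x2 * r = \<sigma> 1 r * x2 \<and> \<sigma> 1 r \<in> R" by simp
    qed
    have e1: "\<And>r. r \<in> R \<Longrightarrow> s11 r = \<sigma> 0 r \<and> s12 r = 0"
    proof -
      fix r assume r: "r \<in> R"
      have "s11 r * x1 + s12 r * x2 = \<sigma> 0 r * x1 + 0 * x2" using sig q1[OF r] r by simp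
      then show "s11 r = \<sigma> 0 r \<and> s12 r = 0" using two sig r q1[OF r] R0 by blast
    qed
    have e2: "\<And>r. r \<in> R \<Longrightarrow> s22 r = \<sigma> 1 r \<and> s21 r = 0"
    proof -
      fix r assume r: "r \<in> R"
      have "s21 r * x1 + s22 r * x2 = 0 * x1 + \<sigma> 1 r * x2" using sig q2[OF r] r by simp
      then show "s22 r = \<sigma> 1 r \<and> s21 r = 0" using two sig r q2[OF r] R0 by blast
    qed
    have "[x1, x2] ! 1 * [x1, x2] ! 0 = c 0 1 * [x1, x2] ! 0 * [x1, x2] ! 1" using h4 L0 L1 by blast
    then have x21: "x2 * x1 = c 0 1 * x1 * x2" by simp
    have c01: "c 0 1 \<in> R" "c 0 1 \<noteq> 0" using h2 L0 L1 by blast+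
    have "c 0 1 * (x1 * x2) + 0 * x1 ^ 2 = phi p12 * (x1 * x2) + phi p11 * x1 ^ 2"
      using x21 rel by (simp add: mult.assoc)
    then have "c 0 1 = phi p12 \<and> 0 = phi p11" using twoq c01 R0 phiR by blast
    then have P1: "p12 \<noteq> 0" and P2: "p11 = 0" using c01 phi0 injphi by (metis injD)+
    have aut1: "ring_aut_on R s11"
      unfolding ring_aut_on_def
    proof (intro conjI ballI)
      show "bij_betw s11 R R" using h5 L0 e1 bij_betw_cong[of R s11 "\<sigma> 0" R] by blast
    next
      fix a b assume a: "a \<in> R" and b: "b \<in> R"
      have ab: "a + b \<in> R" "a * b \<in> R" using Rclos a b by auto
      have gen: "\<And>r. r \<in> R \<Longrightarrow> x1 * r = s11 r * x1 \<and> s11 r \<in> R"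
        using q1 e1 by metis
      have ea: "x1 * a = s11 a * x1" "s11 a \<in> R" using gen[OF a] by blast+
      have eb: "x1 * b = s11 b * x1" "s11 b \<in> R" using gen[OF b] by blast+
      have eab: "x1 * (a + b) = s11 (a + b) * x1" "s11 (a + b) \<in> R" using gen[OF ab(1)] by blast+
      have emb: "x1 * (a * b) = s11 (a * b) * x1" "s11 (a * b) \<in> R" using gen[OF ab(2)] by blast+
      have "s11 (a + b) * x1 = x1 * a + x1 * b" using eab(1) distrib_left[of x1 a b] by simp
      also have "\<dots> = (s11 a + s11 b) * x1" using ea eb distrib_right[of "s11 a" "s11 b" x1] by simp
      finally have E1: "s11 (a + b) * x1 = (s11 a + s11 b) * x1" .
      show "s11 (a + b) = s11 a + s11 b"
        by (rule one1[OF eab(2) _ E1]) (use Rclos ea eb in blast)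
      have "s11 (a * b) * x1 = (x1 * a) * b" using emb(1) by (simp add: mult.assoc)
      also have "\<dots> = s11 a * (x1 * b)" using ea by (simp add: mult.assoc)
      also have "\<dots> = (s11 a * s11 b) * x1" using eb by (simp add: mult.assoc)
      finally have E2: "s11 (a * b) * x1 = (s11 a * s11 b) * x1" .
      show "s11 (a * b) = s11 a * s11 b"
        by (rule one1[OF emb(2) _ E2]) (use Rclos ea eb in blast)
    next
      have "s11 1 * x1 = 1 * x1" using q1[OF R1] e1[OF R1] by simp
      then show "s11 1 = 1" using one1 sig R1 by blast
    qed
    have aut2: "ring_aut_on R s22"
      unfolding ring_aut_on_def
    proof (intro conjI ballI)
      show "bij_betw s22 R R" using h5 L1 e2 bij_betw_cong[of R s22 "\<sigma> 1" R] by blast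
    next
      fix a b assume a: "a \<in> R" and b: "b \<in> R"
      have ab: "a + b \<in> R" "a * b \<in> R" using Rclos a b by auto
      have gen: "\<And>r. r \<in> R \<Longrightarrow> x2 * r = s22 r * x2 \<and> s22 r \<in> R"
        using q2 e2 by metis
      have ea: "x2 * a = s22 a * x2" "s22 a \<in> R" using gen[OF a] by blast+
      have eb: "x2 * b = s22 b * x2" "s22 b \<in> R" using gen[OF b] by blast+
      have eab: "x2 * (a + b) = s22 (a + b) * x2" "s22 (a + b) \<in> R" using gen[OF ab(1)] by blast+
      have emb: "x2 * (a * b) = s22 (a * b) * x2" "s22 (a * b) \<in> R" using gen[OF ab(2)] by blast+
      have "s22 (a + b) * x2 = x2 * a + x2 * b" using eab(1) distrib_left[of x2 a b] by simp
      also have "\<dots> = (s22 a + s22 b) * x2" using ea eb distrib_right[of "s22 a" "s22 b" x2] by simp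
      finally have E1: "s22 (a + b) * x2 = (s22 a + s22 b) * x2" .
      show "s22 (a + b) = s22 a + s22 b"
        by (rule one2[OF eab(2) _ E1]) (use Rclos ea eb in blast)
      have "s22 (a * b) * x2 = (x2 * a) * b" using emb(1) by (simp add: mult.assoc)
      also have "\<dots> = s22 a * (x2 * b)" using ea by (simp add: mult.assoc)
      also have "\<dots> = (s22 a * s22 b) * x2" using eb by (simp add: mult.assoc)
      finally have E2: "s22 (a * b) * x2 = (s22 a * s22 b) * x2" .
      show "s22 (a * b) = s22 a * s22 b"
        by (rule one2[OF emb(2) _ E2]) (use Rclos ea eb in blast)
    next
      have "s22 1 * x2 = 1 * x2" using q2[OF R1] e2[OF R1] by simp
      then show "s22 1 = 1" using one2 sig R1 by blast
    qed
    show "p12 \<noteq> 0 \<and> p11 = 0 \<and> ring_aut_on R s11 \<and> ring_aut_on R s22 \<and>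
           (\<forall>r\<in>R. s12 r = 0) \<and> (\<forall>r\<in>R. s21 r = 0)"
      using P1 P2 aut1 aut2 e1 e2 by blast
  next
    assume H: "p12 \<noteq> 0 \<and> p11 = 0 \<and> ring_aut_on R s11 \<and> ring_aut_on R s22 \<and>
           (\<forall>r\<in>R. s12 r = 0) \<and> (\<forall>r\<in>R. s21 r = 0)"
    have p12: "p12 \<noteq> 0" and p11: "p11 = 0" and A1: "ring_aut_on R s11" and A2: "ring_aut_on R s22"
      and z12: "\<forall>r\<in>R. s12 r = 0" and z21: "\<forall>r\<in>R. s21 r = 0" using H by blast+
    define \<sigma> where "\<sigma> = (\<lambda>(i::nat) r. if i = 0 then s11 r else s22 r)"
    define \<delta> where "\<delta> = (\<lambda>(i::nat) (r::'a). (0::'a))"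
    define c where "c = (\<lambda>(i::nat) (j::nat). if i = j then 1 else if i = 0 then phi p12 else phi (inverse p12))"
    have lt2: "\<And>i::nat. i < length [x1, x2] \<Longrightarrow> i = 0 \<or> i = 1" by auto
    have span0: "\<And>S0 S1. (0::'a) \<in> S0 \<Longrightarrow> (0::'a) \<in> S1 \<Longrightarrow> (0::'a) \<in> lin_span_vars S0 S1 [x1, x2]"
    proof -
      fix S0 S1 :: "'a set" assume "0 \<in> S0" "(0::'a) \<in> S1"
      then show "(0::'a) \<in> lin_span_vars S0 S1 [x1, x2]"
        unfolding lin_span_vars_def by (intro CollectI exI[of _ 0] exI[of _ "\<lambda>_. 0"]) simp
    qed
    have aut0: "\<And>s. ring_aut_on R s \<Longrightarrow> s 0 = 0"
    proof -
      fix s assume "ring_aut_on R s"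
      then have "s (0 + 0) = s 0 + s 0" using R0 unfolding ring_aut_on_def by blast
      then show "s 0 = 0" by simp
    qed
    have autnz: "\<And>s r. ring_aut_on R s \<Longrightarrow> r \<in> R \<Longrightarrow> r \<noteq> 0 \<Longrightarrow> s r \<noteq> 0"
    proof -
      fix s r assume s: "ring_aut_on R s" and r: "r \<in> R" "r \<noteq> 0"
      have "inj_on s R" using s unfolding ring_aut_on_def bij_betw_def by blast
      then have "s r \<noteq> s 0" using r R0 by (metis inj_onD)
      then show "s r \<noteq> 0" using aut0[OF s] by simp
    qed
    have autR: "\<And>s r. ring_aut_on R s \<Longrightarrow> r \<in> R \<Longrightarrow> s r \<in> R"
      unfolding ring_aut_on_def bij_betw_def by blast
    have phinz: "\<And>k. k \<noteq> 0 \<Longrightarrow> phi k * phi (inverse k) = 1 \<and> phi (inverse k) * phi k = 1"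
      by (metis phimul phi1 left_inverse right_inverse)
    have cphi: "\<And>i j. \<exists>k. k \<noteq> 0 \<and> c i j = phi k"
      unfolding c_def using p12 phi1 by (metis inverse_nonzero_iff_nonzero one_neq_zero)
    have cR: "\<And>i j. c i j \<in> R \<and> c i j \<noteq> 0 \<and> c i j \<in> Rg 0 \<and> (\<exists>d\<in>R. c i j * d = 1 \<and> d * c i j = 1)"
    proof -
      fix i j
      obtain k where k: "k \<noteq> 0" "c i j = phi k" using cphi by blast
      have "phi (inverse k) \<in> R" using phiR by blast
      moreover have "phi k \<in> R" using phiR by blast
      moreover have "phi k \<noteq> 0" using phinz[OF k(1)] nt by auto
      ultimately show "c i j \<in> R \<and> c i j \<noteq> 0 \<and> c i j \<in> Rg 0 \<and> (\<exists>d\<in>R. c i j * d = 1 \<and> d * c i j = 1)"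
        using k phinz[OF k(1)] Rg0 by auto
    qed
    have x21: "x2 * x1 = phi p12 * x1 * x2" using rel p11 phi0 by simp
    have x12: "x1 * x2 = phi (inverse p12) * x2 * x1"
    proof -
      have "phi (inverse p12) * x2 * x1 = phi (inverse p12) * (x2 * x1)" by (simp add: mult.assoc)
      also have "\<dots> = (phi (inverse p12) * phi p12) * (x1 * x2)" unfolding x21 by (simp add: mult.assoc)
      also have "\<dots> = x1 * x2" using phinz[OF p12] by simp
      finally show ?thesis by simp
    qed
    have crel: "\<forall>i<length [x1, x2]. \<forall>j<length [x1, x2]. [x1, x2] ! j * [x1, x2] ! i = c i j * [x1, x2] ! i * [x1, x2] ! j"
    proof (intro allI impI)
      fix i j :: nat assume i: "i < length [x1, x2]" and j: "j < length [x1, x2]"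
      from lt2[OF i] lt2[OF j] show "[x1, x2] ! j * [x1, x2] ! i = c i j * [x1, x2] ! i * [x1, x2] ! j"
        using x21 x12 by (auto simp: c_def)
    qed
    have srel: "\<forall>i<length [x1, x2]. \<forall>r\<in>R. \<sigma> i r \<in> R \<and> \<delta> i r \<in> R \<and> [x1, x2] ! i * r = \<sigma> i r * [x1, x2] ! i + \<delta> i r"
    proof (intro allI impI ballI)
      fix i :: nat and r assume i: "i < length [x1, x2]" and r: "r \<in> R"
      have "x1 * r = s11 r * x1" "x2 * r = s22 r * x2" using sig z12 z21 r by auto
      then show "\<sigma> i r \<in> R \<and> \<delta> i r \<in> R \<and> [x1, x2] ! i * r = \<sigma> i r * [x1, x2] ! i + \<delta> i r"
        using lt2[OF i] autR[OF A1 r] autR[OF A2 r] R0 by (auto simp: \<sigma>_def \<delta>_def)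
    qed
    have sbij: "\<forall>i<length [x1, x2]. bij_betw (\<sigma> i) R R"
    proof (intro allI impI)
      fix i :: nat assume i: "i < length [x1, x2]"
      have b1: "bij_betw s11 R R" and b2: "bij_betw s22 R R" using A1 A2 unfolding ring_aut_on_def by blast+
      show "bij_betw (\<sigma> i) R R"
      proof (cases "i = 0")
        case True
        then have "\<sigma> i = s11" unfolding \<sigma>_def by auto
        then show ?thesis using b1 by simp
      next
        case False
        then have "\<sigma> i = s22" unfolding \<sigma>_def by auto
        then show ?thesis using b2 by simp
      qed
    qed
    have sgr2: "\<forall>i<length [x1, x2]. \<forall>m. \<sigma> i ` Rg m \<subseteq> Rg m \<and> \<delta> i ` Rg m \<subseteq> Rg (Suc m)"
    proof (intro allI impI conjI)
      fix i :: nat and m assume i: "i < length [x1, x2]"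
      show "\<sigma> i ` Rg m \<subseteq> Rg m" using lt2[OF i] sgr unfolding \<sigma>_def by auto
      show "\<delta> i ` Rg m \<subseteq> Rg (Suc m)" using Rg unfolding \<delta>_def by auto
    qed
    have diff0: "\<forall>i<length [x1, x2]. \<forall>j<length [x1, x2].
         [x1, x2] ! j * [x1, x2] ! i - c i j * [x1, x2] ! i * [x1, x2] ! j = 0"
      using crel by simp
    have skew: "skew_PBW R [x1, x2]"
      unfolding skew_PBW_def
    proof (intro conjI allI impI ballI)
      show "subring_set R" by (rule sR)
      show "left_free_basis R {\<alpha>. length \<alpha> = length [x1, x2]} (pbw_mono [x1, x2])"
        by (rule pbw_basis2[OF lfb R0])
    next
      fix i :: nat and r assume i: "i < length [x1, x2]" and r: "r \<in> R" and nz: "r \<noteq> 0"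
      have "\<sigma> i r \<noteq> 0" using lt2[OF i] autnz[OF A1 r nz] autnz[OF A2 r nz] by (auto simp: \<sigma>_def)
      moreover have "\<sigma> i r \<in> R" "[x1, x2] ! i * r - \<sigma> i r * [x1, x2] ! i = 0"
        using srel i r by (auto simp: \<delta>_def)
      ultimately show "\<exists>c\<in>R. c \<noteq> 0 \<and> [x1, x2] ! i * r - c * [x1, x2] ! i \<in> R" using R0 by metis
    next
      fix i j :: nat assume i: "i < length [x1, x2]" and j: "j < length [x1, x2]"
      have "[x1, x2] ! j * [x1, x2] ! i - c i j * [x1, x2] ! i * [x1, x2] ! j \<in> lin_span_vars R R [x1, x2]"
        using diff0 i j span0[OF R0 R0] by simp
      then show "\<exists>c\<in>R. c \<noteq> 0 \<and> [x1, x2] ! j * [x1, x2] ! i - c * [x1, x2] ! i * [x1, x2] ! j \<in> lin_span_vars R R [x1, x2]"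
        using cR by blast
    qed
    have sp1: "\<forall>i<length [x1, x2]. \<forall>j<length [x1, x2]. c i j \<in> R \<and> c i j \<noteq> 0 \<and>
            [x1, x2] ! j * [x1, x2] ! i - c i j * [x1, x2] ! i * [x1, x2] ! j \<in> lin_span_vars R R [x1, x2]"
      using diff0 span0[OF R0 R0] cR by simp
    have sp2: "\<forall>i<length [x1, x2]. \<forall>j<length [x1, x2]. c i j \<in> Rg 0 \<and>
            [x1, x2] ! j * [x1, x2] ! i - c i j * [x1, x2] ! i * [x1, x2] ! j \<in> lin_span_vars (Rg 2) (Rg 1) [x1, x2]"
      using diff0 span0 Rg cR by simp
    have d0: "\<forall>i<length [x1, x2]. \<forall>r\<in>R. \<delta> i r = 0" by (simp add: \<delta>_def)
    have cinv: "\<forall>i<length [x1, x2]. \<forall>j<length [x1, x2]. \<exists>d\<in>R. c i j * d = 1 \<and> d * c i j = 1"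
      using cR by blast
    show "graded_qc_skew_PBW phi R Rg [x1, x2]"
      unfolding graded_qc_skew_PBW_def
      using skew ga srel sp1 d0 crel sbij cinv sgr2 sp2 by blast
  qed
qed

end
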